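(* Let $(X,V)$ and $(\overline{X},\overline{V})$ be solutions of the discrete Motsch–Tadmor model (as in the context) whose initial data satisfy \[ \max\{\|\Delta^x(0)\|_F,\|\Delta^{\overline{x}}(0)\|_F\}<M,\quad \|\Delta^v(0)\|_F<\kappa\int_{\|\Delta^x(0)\|_F}^M\psi(s)\,ds,\quad \|\Delta^{\overline{v}}(0)\|_F<\kappa\int_{\|\Delta^{\overline{x}}(0)\|_F}^M\psi(s)\,ds, \] and let $C\in(0,1)$. Then there are constants $\bar c_0,\bar c_1,\bar c_2\ge0$ depending on $V(0)$, $\overline{V}(0)$ and the model parameters such that, for $h>0$ sufficiently small and any $0<\epsilon<1$, with $b_1=(\bar c_0\epsilon+\bar c_1h+\bar c_2h^2)^{1/2}$ and $b_2=C\kappa\psi(M)h$, for all $n\ge0$ \[ \|\Delta^v(n)-\Delta^{\overline{v}}(n)\|_F\le(1-\epsilon)^n\|\Delta^v(0)-\Delta^{\overline{v}}(0)\|_F+\frac{b_1e^{b_2}}{1-(1-\epsilon)e^{b_2}}e^{-b_2n}. \]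
   Context: Discrete MT model: fix $N\ge1$, $d\ge1$, $\kappa>0$, $h>0$, and $a:[0,\infty)\to\mathbb{R}$ with constants $0<c_1\le c_2$, $c_1\le a\le c_2$, $|a(r_1)-a(r_2)|\le L_a|r_1-r_2|$ ($L_a>0$); $0<h<\min\{1,1/\kappa\}$. A solution satisfies $x_i(n+1)=x_i(n)+hv_i(n)$, $v_i(n+1)=v_i(n)+h\kappa\sum_j\phi_{ij}(n)(v_j(n)-v_i(n))$ with $\phi_{ij}(n)=\frac{a(\|x_i(n)-x_j(n)\|)}{\sum_ka(\|x_i(n)-x_k(n)\|)}$, $x_i,v_i\in\mathbb{R}^d$. Notation: $\Delta^x_{ij}=x_i-x_j$, $\Delta^v_{ij}=v_i-v_j$, similarly $\Delta^{\overline{x}},\Delta^{\overline{v}}$; $\|A\|_F=(\sum_{i,j}\|A_{ij}\|^2)^{1/2}$. Constants: $\|\phi\|_{\mathrm{Lip}}=\frac{L_a}{Nc_1}(1+\frac{c_2}{c_1})$, $M=\frac{1}{4N\|\phi\|_{\mathrm{Lip}}}$, $\psi(s)=1-\|\phi\|_{\mathrm{Lip}}Ns$. *)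

theory Defs
  imports "HOL-Analysis.Analysis"
begin

text \<open>Agents are indexed by i < N; positions/velocities live in real^'d (d = CARD('d) \<ge> 1).
  A trajectory is a function nat (time step) \<Rightarrow> nat (agent index) \<Rightarrow> real^'d.\<close>

definition mt_phi :: "nat \<Rightarrow> (real \<Rightarrow> real) \<Rightarrow> (nat \<Rightarrow> real^'d) \<Rightarrow> nat \<Rightarrow> nat \<Rightarrow> real" where
  "mt_phi N a x i j = a (norm (x i - x j)) / (\<Sum>k<N. a (norm (x i - x k)))"

definition MT_solution :: "nat \<Rightarrow> real \<Rightarrow> (real \<Rightarrow> real) \<Rightarrow> real \<Rightarrow>
    (nat \<Rightarrow> nat \<Rightarrow> real^'d) \<Rightarrow> (nat \<Rightarrow> nat \<Rightarrow> real^'d) \<Rightarrow> bool" where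
  "MT_solution N \<kappa> a h x v \<longleftrightarrow>
     (\<forall>n i. i < N \<longrightarrow>
        x (Suc n) i = x n i + h *\<^sub>R v n i \<and>
        v (Suc n) i = v n i + (h * \<kappa>) *\<^sub>R (\<Sum>j<N. mt_phi N a (x n) i j *\<^sub>R (v n j - v n i)))"

text \<open>Frobenius norm of the difference matrix (Delta_{ij}) = (y_i - y_j).\<close>
definition frobD :: "nat \<Rightarrow> (nat \<Rightarrow> real^'d) \<Rightarrow> real" where
  "frobD N y = sqrt (\<Sum>i<N. \<Sum>j<N. (norm (y i - y j))\<^sup>2)"

definition frobDD :: "nat \<Rightarrow> (nat \<Rightarrow> real^'d) \<Rightarrow> (nat \<Rightarrow> real^'d) \<Rightarrow> real" where
  "frobDD N y z = sqrt (\<Sum>i<N. \<Sum>j<N. (norm ((y i - y j) - (z i - z j)))\<^sup>2)"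

definition lip_phi :: "nat \<Rightarrow> real \<Rightarrow> real \<Rightarrow> real \<Rightarrow> real" where
  "lip_phi N La c1 c2 = La / (real N * c1) * (1 + c2 / c1)"

definition M_const :: "nat \<Rightarrow> real \<Rightarrow> real \<Rightarrow> real \<Rightarrow> real" where
  "M_const N La c1 c2 = 1 / (4 * real N * lip_phi N La c1 c2)"

definition psi :: "nat \<Rightarrow> real \<Rightarrow> real \<Rightarrow> real \<Rightarrow> real \<Rightarrow> real" where
  "psi N La c1 c2 s = 1 - lip_phi N La c1 c2 * real N * s"

end

theory Submission
  imports Defs
begin


lemma integral_psi:
  fixes P0 M l :: real
  assumes "P0 \<le> M"
  shows "integral {P0..M} (\<lambda>s. 1 - l * s) = (M - l * M^2/2) - (P0 - l * P0^2/2)"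
proof -
  have "((\<lambda>s. 1 - l * s) has_integral ((\<lambda>s. s - l * s^2/2) M - (\<lambda>s. s - l * s^2/2) P0)) {P0..M}"
    apply (rule fundamental_theorem_of_calculus[OF assms])
    apply (rule has_vector_derivative_within_subset[where S=UNIV], simp_all)
    unfolding has_real_derivative_iff_has_vector_derivative[symmetric]
    apply (auto intro!: derivative_eq_intros simp: power2_eq_square)
    done
  then show ?thesis by (simp add: integral_unique)
qed

primrec PQ :: "real \<Rightarrow> real \<Rightarrow> real \<Rightarrow> real \<Rightarrow> real \<Rightarrow> nat \<Rightarrow> real \<times> real" where
  "PQ l h k P0 Q0 0 = (P0, Q0)"
| "PQ l h k P0 Q0 (Suc n) = (let (p, q) = PQ l h k P0 Q0 n in (p + h*q, (1 - h*k*(1 - l*p))*q))"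

lemma PQ_Suc: "fst (PQ l h k P0 Q0 (Suc n)) = fst (PQ l h k P0 Q0 n) + h * snd (PQ l h k P0 Q0 n)"
  "snd (PQ l h k P0 Q0 (Suc n)) = (1 - h*k*(1 - l*fst (PQ l h k P0 Q0 n))) * snd (PQ l h k P0 Q0 n)"
  by (simp_all add: case_prod_beta Let_def)

lemma PQ_inv:
  fixes l h k P0 Q0 :: real
  defines "M \<equiv> 1 / (4*l)"
  defines "Psi \<equiv> \<lambda>s. s - l * s^2/2"
  assumes l: "l > 0" and h: "0 < h" "h < 1" "h * k < 1" and k: "k > 0"
    and P0: "0 \<le> P0" "P0 < M" and Q0: "0 \<le> Q0" "Q0 + k * Psi P0 < k * Psi M"
  shows "0 \<le> fst (PQ l h k P0 Q0 n) \<and> fst (PQ l h k P0 Q0 n) < M \<and> 0 \<le> snd (PQ l h k P0 Q0 n)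
     \<and> snd (PQ l h k P0 Q0 n) + k * Psi (fst (PQ l h k P0 Q0 n)) \<le> Q0 + k * Psi P0
     \<and> snd (PQ l h k P0 Q0 n) \<le> (1 - h*k*(3/4))^n * Q0"
proof (induction n)
  case 0
  then show ?case using P0 Q0 by simp
next
  case (Suc n)
  define p where "p = fst (PQ l h k P0 Q0 n)"
  define q where "q = snd (PQ l h k P0 Q0 n)"
  have IH: "0 \<le> p" "p < M" "0 \<le> q" "q + k * Psi p \<le> Q0 + k * Psi P0" "q \<le> (1 - h*k*(3/4))^n * Q0"
    using Suc unfolding p_def q_def by auto
  have e1: "fst (PQ l h k P0 Q0 (Suc n)) = p + h*q" "snd (PQ l h k P0 Q0 (Suc n)) = (1 - h*k*(1-l*p))*q"
    unfolding p_def q_def PQ_Suc by auto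
  have lM: "l * M = 1/4" using l unfolding M_def by simp
  have lp: "l * p < 1/4" using IH(2) l lM by (metis mult_strict_left_mono)
  have lp0: "0 \<le> l * p" using l IH(1) by simp
  have hk: "0 < h*k" using h k by simp
  have "h*k*(1-l*p) \<le> h*k*1" using hk lp0 by (intro mult_left_mono) auto
  hence c0: "0 \<le> 1 - h*k*(1-l*p)" using h(3) by linarith
  have c1: "1 - h*k*(1-l*p) \<le> 1 - h*k*(3/4)" 
  proof -
    have "h*k*(3/4) \<le> h*k*(1-l*p)" using hk lp by (intro mult_left_mono) auto
    thus ?thesis by simp
  qed
  have lyap: "(1 - h*k*(1-l*p))*q + k * Psi (p + h*q) = q + k * Psi p - k*l*h^2*q^2/2"
    unfolding Psi_def by (simp add: algebra_simps power2_eq_square)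
  have "0 \<le> k*l*h^2*q^2/2" using k l by simp
  hence L: "(1 - h*k*(1-l*p))*q + k * Psi (p + h*q) \<le> Q0 + k * Psi P0" using lyap IH(4) by linarith
  have q0: "0 \<le> (1 - h*k*(1-l*p))*q" using c0 IH(3) by simp
  have PsiM: "Psi M = M - l * M^2/2" unfolding Psi_def by simp
  have "Psi p = p * (1 - l*p/2)" unfolding Psi_def by (simp add: algebra_simps power2_eq_square)
  moreover have "0 \<le> 1 - l*p/2" using lp by simp
  ultimately have Psip: "0 \<le> Psi p" using IH(1) by simp
  have "0 \<le> k * Psi p" using Psip k by simp
  hence "q < k * Psi M" using IH(4) Q0(2) by linarith
  hence "h*q < h*k*Psi M" using h by simp
  also have "\<dots> \<le> Psi M"
  proof -
    have "Psi M = M * (1 - l*M/2)" unfolding Psi_def by (simp add: algebra_simps power2_eq_square)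
    moreover have "0 \<le> M" using l unfolding M_def by simp
    moreover have "0 \<le> 1 - l*M/2" using lM by simp
    ultimately have "0 \<le> Psi M" by simp
    thus ?thesis using hk h(3) by (intro mult_left_le_one_le) auto
  qed
  also have "Psi M \<le> M" using PsiM l by simp
  finally have hq: "h*q < M" .
  have "k * Psi (p + h*q) < k * Psi M" using L q0 Q0(2) by linarith
  hence Pn: "Psi (p + h*q) < Psi M" using k by simp
  have "p + h*q < M"
  proof (rule ccontr)
    assume "\<not> ?thesis"
    hence ge: "M \<le> p + h*q" by simp
    have lt2: "p + h*q < 2*M" using IH(2) hq by simp
    have "Psi M - Psi (p+h*q) = (p + h*q - M) * (l*(M + (p+h*q))/2 - 1)"
      unfolding Psi_def by (simp add: power2_eq_square field_simps)
    moreover have "l*(M + (p+h*q))/2 - 1 < 0"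
    proof -
      have "l*(p+h*q) < l*(2*M)" using lt2 l by simp
      thus ?thesis using lM by (simp add: distrib_left)
    qed
    ultimately have "Psi M - Psi (p+h*q) \<le> 0" using ge by (simp add: mult_nonneg_nonpos)
    thus False using Pn by simp
  qed
  moreover have "(1 - h*k*(1-l*p))*q \<le> (1 - h*k*(3/4))^Suc n * Q0"
  proof -
    have "(1 - h*k*(1-l*p))*q \<le> (1 - h*k*(3/4)) * q" using c1 IH(3) by (simp add: mult_right_mono)
    also have "\<dots> \<le> (1 - h*k*(3/4)) * ((1 - h*k*(3/4))^n * Q0)"
      using IH(5) c0 c1 by (intro mult_left_mono) auto
    finally show ?thesis by simp
  qed
  ultimately show ?case unfolding e1 using IH q0 L h by simp
qed



lemma phi_sum:
  fixes x :: "nat \<Rightarrow> real^'d"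
  assumes N: "N \<ge> 1" and c1: "0 < c1" and a_bounds: "\<And>r. r \<ge> 0 \<Longrightarrow> c1 \<le> a r \<and> a r \<le> c2"
    and i: "i < N"
  shows "(\<Sum>j<N. mt_phi N a x i j) = 1" "0 \<le> mt_phi N a x i j"
    "real N * c1 \<le> (\<Sum>k<N. a (norm (x i - x k)))"
proof -
  define S where "S = (\<Sum>k<N. a (norm (x i - x k)))"
  have "(\<Sum>k<N. c1) \<le> S" unfolding S_def by (rule sum_mono) (use a_bounds in auto)
  hence S1: "real N * c1 \<le> S" by simp
  hence Sp: "0 < S" using N c1 by (smt (verit) mult_pos_pos of_nat_0_less_iff not_one_le_zero neq0_conv)
  show "real N * c1 \<le> (\<Sum>k<N. a (norm (x i - x k)))" using S1 S_def by simp
  show "(\<Sum>j<N. mt_phi N a x i j) = 1" unfolding mt_phi_def S_def[symmetric]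
    using Sp by (simp add: sum_divide_distrib[symmetric] S_def)
  show "0 \<le> mt_phi N a x i j" unfolding mt_phi_def S_def[symmetric]
    using Sp a_bounds[of "norm (x i - x j)"] c1 by simp
qed

lemma phi_lower:
  fixes x :: "nat \<Rightarrow> real^'d"
  assumes N: "N \<ge> 1" and c1: "0 < c1" and c12: "c1 \<le> c2"
    and a_bounds: "\<And>r. r \<ge> 0 \<Longrightarrow> c1 \<le> a r \<and> a r \<le> c2"
    and La: "La > 0"
    and a_lip: "\<And>r1 r2. r1 \<ge> 0 \<Longrightarrow> r2 \<ge> 0 \<Longrightarrow> \<bar>a r1 - a r2\<bar> \<le> La * \<bar>r1 - r2\<bar>"
    and P: "0 \<le> P" and xb: "\<forall>j<N. \<forall>k<N. norm (x j - x k) \<le> P"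
    and i: "i < N" and j: "j < N"
  shows "(1 - lip_phi N La c1 c2 * real N * P) / real N \<le> mt_phi N a x i j"
proof -
  define S where "S = (\<Sum>k<N. a (norm (x i - x k)))"
  define aj where "aj = a (norm (x i - x j))"
  have S1: "real N * c1 \<le> S" using phi_sum(3)[OF N c1 a_bounds i] S_def by simp
  have Np: "0 < real N" using N by simp
  have Sp: "0 < S" using S1 Np c1 by (smt (verit) mult_pos_pos)
  have "S - real N * aj = (\<Sum>k<N. a (norm (x i - x k)) - aj)"
    unfolding S_def by (simp add: sum_subtractf)
  also have "\<dots> \<le> (\<Sum>k<N. La * P)"
  proof (rule sum_mono)
    fix k assume "k \<in> {..<N}"
    hence k: "k < N" by simp
    have "a (norm (x i - x k)) - aj \<le> La * \<bar>norm (x i - x k) - norm (x i - x j)\<bar>"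
      unfolding aj_def using a_lip[of "norm (x i - x k)" "norm (x i - x j)"] by simp
    also have "\<bar>norm (x i - x k) - norm (x i - x j)\<bar> \<le> norm ((x i - x k) - (x i - x j))"
      by (rule norm_triangle_ineq3)
    also have "norm ((x i - x k) - (x i - x j)) = norm (x j - x k)" by (simp add: norm_minus_commute)
    also have "\<dots> \<le> P" using xb j k by simp
    finally show "a (norm (x i - x k)) - aj \<le> La * P" using La by (simp add: mult_left_mono)
  qed
  also have "\<dots> = real N * La * P" by simp
  also have "\<dots> \<le> lip_phi N La c1 c2 * real N * P * S"
  proof -
    have e: "lip_phi N La c1 c2 * real N * (real N * c1) = La * (1 + c2/c1) * real N"
      unfolding lip_phi_def using Np c1 by (simp add: field_simps)
    have "La * real N \<le> La * (1 + c2/c1) * real N" using La Np c1 c12 by (simp add: field_simps)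
    also have "\<dots> = lip_phi N La c1 c2 * real N * (real N * c1)" using e by linarith
    also have "\<dots> \<le> lip_phi N La c1 c2 * real N * S"
      using S1 Np c1 La c12 unfolding lip_phi_def by (intro mult_left_mono) (auto simp: field_simps)
    finally have "La * real N \<le> lip_phi N La c1 c2 * real N * S" .
    thus ?thesis using P by (metis mult.commute mult.left_commute mult_right_mono)
  qed
  finally have "(1 - lip_phi N La c1 c2 * real N * P) * S \<le> real N * aj" by (simp add: algebra_simps)
  thus ?thesis unfolding mt_phi_def S_def[symmetric] aj_def[symmetric] using Sp Np
    by (simp add: field_simps)
qed

lemma contract:
  fixes v :: "nat \<Rightarrow> 'a::real_normed_vector" and w :: "nat \<Rightarrow> nat \<Rightarrow> real"
  assumes wi: "\<forall>j<N. \<mu> \<le> w i j" and wk: "\<forall>j<N. \<mu> \<le> w k j"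
    and si: "(\<Sum>j<N. w i j) = 1" and sk: "(\<Sum>j<N. w k j) = 1"
    and vb: "\<forall>j<N. \<forall>l<N. norm (v j - v l) \<le> Q"
  shows "norm ((\<Sum>j<N. w i j *\<^sub>R v j) - (\<Sum>j<N. w k j *\<^sub>R v j)) \<le> (1 - real N * \<mu>) * Q"
proof -
  define Bi where "Bi = (\<lambda>j. w i j - \<mu>)"
  define Bk where "Bk = (\<lambda>j. w k j - \<mu>)"
  define \<beta> where "\<beta> = 1 - real N * \<mu>"
  have sBi: "(\<Sum>j<N. Bi j) = \<beta>" unfolding Bi_def \<beta>_def using si by (simp add: sum_subtractf)
  have sBk: "(\<Sum>j<N. Bk j) = \<beta>" unfolding Bk_def \<beta>_def using sk by (simp add: sum_subtractf)
  have Bi0: "\<forall>j<N. 0 \<le> Bi j" using wi Bi_def by simp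
  have Bk0: "\<forall>j<N. 0 \<le> Bk j" using wk Bk_def by simp
  have diff: "(\<Sum>j<N. w i j *\<^sub>R v j) - (\<Sum>j<N. w k j *\<^sub>R v j)
      = (\<Sum>j<N. Bi j *\<^sub>R v j) - (\<Sum>j<N. Bk j *\<^sub>R v j)"
    unfolding Bi_def Bk_def by (simp add: scaleR_diff_left sum_subtractf)
  have Nge: "N \<ge> 1" using si by (cases N) auto
  have Q0: "0 \<le> Q" using vb Nge by (metis norm_ge_zero order_trans less_le_trans zero_less_one)
  have b0: "0 \<le> \<beta>" using sBi Bi0 by (metis lessThan_iff sum_nonneg)
  show ?thesis
  proof (cases "\<beta> = 0")
    case True
    have "\<forall>j\<in>{..<N}. Bi j = 0" using sum_nonneg_eq_0_iff[of "{..<N}" Bi] Bi0 sBi True by auto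
    moreover have "\<forall>j\<in>{..<N}. Bk j = 0" using sum_nonneg_eq_0_iff[of "{..<N}" Bk] Bk0 sBk True by auto
    ultimately show ?thesis unfolding diff \<beta>_def[symmetric] True by simp
  next
    case False
    hence bp: "0 < \<beta>" using b0 by simp
    have ident: "\<beta> *\<^sub>R ((\<Sum>j<N. Bi j *\<^sub>R v j) - (\<Sum>j<N. Bk j *\<^sub>R v j))
        = (\<Sum>j<N. \<Sum>l<N. (Bi j * Bk l) *\<^sub>R (v j - v l))"
    proof -
      have "(\<Sum>j<N. \<Sum>l<N. (Bi j * Bk l) *\<^sub>R (v j - v l))
          = (\<Sum>j<N. \<Sum>l<N. (Bi j * Bk l) *\<^sub>R v j) - (\<Sum>j<N. \<Sum>l<N. (Bi j * Bk l) *\<^sub>R v l)"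
        by (simp add: scaleR_diff_right sum_subtractf)
      also have "(\<Sum>j<N. \<Sum>l<N. (Bi j * Bk l) *\<^sub>R v j) = (\<Sum>j<N. \<beta> *\<^sub>R (Bi j *\<^sub>R v j))"
        by (rule sum.cong) (simp_all add: scaleR_sum_left[symmetric] sum_distrib_left[symmetric] sBk mult.commute)
      also have "(\<Sum>j<N. \<Sum>l<N. (Bi j * Bk l) *\<^sub>R v l) = (\<Sum>l<N. \<Sum>j<N. (Bi j * Bk l) *\<^sub>R v l)"
        by (rule sum.swap)
      also have "\<dots> = (\<Sum>l<N. \<beta> *\<^sub>R (Bk l *\<^sub>R v l))"
        by (rule sum.cong) (simp_all add: scaleR_sum_left[symmetric] sum_distrib_right[symmetric] sBi)
      finally show ?thesis by (simp add: scaleR_sum_right scaleR_diff_right)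
    qed
    have "\<beta> * norm ((\<Sum>j<N. Bi j *\<^sub>R v j) - (\<Sum>j<N. Bk j *\<^sub>R v j))
        = norm (\<Sum>j<N. \<Sum>l<N. (Bi j * Bk l) *\<^sub>R (v j - v l))"
      using ident[symmetric] bp by simp
    also have "\<dots> \<le> (\<Sum>j<N. \<Sum>l<N. norm ((Bi j * Bk l) *\<^sub>R (v j - v l)))"
      by (rule order_trans[OF norm_sum sum_mono[OF norm_sum]])
    also have "\<dots> \<le> (\<Sum>j<N. \<Sum>l<N. (Bi j * Bk l) * Q)"
    proof (intro sum_mono)
      fix j l assume "j \<in> {..<N}" "l \<in> {..<N}"
      hence jl: "j < N" "l < N" by auto
      have nn: "0 \<le> Bi j * Bk l" using Bi0 Bk0 jl by simp
      show "norm ((Bi j * Bk l) *\<^sub>R (v j - v l)) \<le> Bi j * Bk l * Q"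
        using nn vb jl by (simp add: mult_left_mono)
    qed
    also have "\<dots> = \<beta> * (\<beta> * Q)"
      by (simp add: sum_distrib_right[symmetric] sum_distrib_left[symmetric] sBi sBk
           mult.assoc flip: sum_distrib_left)
    finally have "\<beta> * norm ((\<Sum>j<N. Bi j *\<^sub>R v j) - (\<Sum>j<N. Bk j *\<^sub>R v j)) \<le> \<beta> * (\<beta> * Q)" .
    hence "norm ((\<Sum>j<N. Bi j *\<^sub>R v j) - (\<Sum>j<N. Bk j *\<^sub>R v j)) \<le> \<beta> * Q"
      using bp by simp
    thus ?thesis unfolding diff \<beta>_def .
  qed
qed



lemma step_repr:
  fixes v :: "nat \<Rightarrow> 'a::real_vector" and \<phi> :: "nat \<Rightarrow> real"
  assumes i: "i < N" and s: "(\<Sum>j<N. \<phi> j) = 1"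
  shows "v i + t *\<^sub>R (\<Sum>j<N. \<phi> j *\<^sub>R (v j - v i))
    = (\<Sum>j<N. ((if j = i then 1 - t else 0) + t * \<phi> j) *\<^sub>R v j)"
proof -
  have d: "(\<lambda>j. (if j = i then 1 - t else 0) *\<^sub>R v j) = (\<lambda>j. if j = i then (1 - t) *\<^sub>R v i else 0)"
    by auto
  have "(\<Sum>j<N. ((if j = i then 1 - t else 0) + t * \<phi> j) *\<^sub>R v j)
     = (\<Sum>j<N. (if j = i then 1 - t else 0) *\<^sub>R v j) + (\<Sum>j<N. (t * \<phi> j) *\<^sub>R v j)"
    by (simp add: scaleR_add_left sum.distrib)
  also have "(\<Sum>j<N. (if j = i then 1 - t else 0) *\<^sub>R v j) = (1 - t) *\<^sub>R v i"
    unfolding d using i by simp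
  also have "(\<Sum>j<N. (t * \<phi> j) *\<^sub>R v j) = t *\<^sub>R (\<Sum>j<N. \<phi> j *\<^sub>R v j)"
    by (simp add: scaleR_sum_right)
  finally have R: "(\<Sum>j<N. ((if j = i then 1 - t else 0) + t * \<phi> j) *\<^sub>R v j)
     = (1 - t) *\<^sub>R v i + t *\<^sub>R (\<Sum>j<N. \<phi> j *\<^sub>R v j)" .
  have "(\<Sum>j<N. \<phi> j *\<^sub>R (v j - v i)) = (\<Sum>j<N. \<phi> j *\<^sub>R v j) - (\<Sum>j<N. \<phi> j) *\<^sub>R v i"
    by (simp add: scaleR_diff_right sum_subtractf scaleR_sum_left)
  also have "\<dots> = (\<Sum>j<N. \<phi> j *\<^sub>R v j) - v i" using s by simp
  finally have S: "(\<Sum>j<N. \<phi> j *\<^sub>R (v j - v i)) = (\<Sum>j<N. \<phi> j *\<^sub>R v j) - v i" .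
  show ?thesis unfolding R S by (simp add: algebra_simps)
qed

lemma agents:
  fixes x v :: "nat \<Rightarrow> nat \<Rightarrow> real^'d" and l :: real
  assumes N: "N \<ge> 1" and c1: "0 < c1" and c12: "c1 \<le> c2"
    and a_bounds: "\<And>r. r \<ge> 0 \<Longrightarrow> c1 \<le> a r \<and> a r \<le> c2"
    and La: "La > 0"
    and a_lip: "\<And>r1 r2. r1 \<ge> 0 \<Longrightarrow> r2 \<ge> 0 \<Longrightarrow> \<bar>a r1 - a r2\<bar> \<le> La * \<bar>r1 - r2\<bar>"
    and k: "\<kappa> > 0" and h: "0 < h" "h < 1" "h * \<kappa> < 1"
    and ldef: "l = lip_phi N La c1 c2 * real N" and l: "l > 0"
    and sol: "MT_solution N \<kappa> a h x v"
    and P0: "0 \<le> P0" "P0 < 1 / (4*l)" and Q0: "0 \<le> Q0"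
      "Q0 + \<kappa> * (\<lambda>s. s - l * s^2/2) P0 < \<kappa> * (\<lambda>s. s - l * s^2/2) (1 / (4*l))"
    and x0: "\<forall>i<N. \<forall>j<N. norm (x 0 i - x 0 j) \<le> P0"
    and v0: "\<forall>i<N. \<forall>j<N. norm (v 0 i - v 0 j) \<le> Q0"
  shows "\<forall>i<N. \<forall>j<N. norm (x n i - x n j) \<le> fst (PQ l h \<kappa> P0 Q0 n)
            \<and> norm (v n i - v n j) \<le> snd (PQ l h \<kappa> P0 Q0 n)"
proof (induction n)
  case 0
  then show ?case using x0 v0 by simp
next
  case (Suc n)
  define p where "p = fst (PQ l h \<kappa> P0 Q0 n)"
  define q where "q = snd (PQ l h \<kappa> P0 Q0 n)"
  have inv: "0 \<le> p" "p < 1/(4*l)" "0 \<le> q"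
    using PQ_inv[OF l h(1,2,3) k P0 Q0, of n] unfolding p_def q_def by auto
  have IH: "\<forall>i<N. \<forall>j<N. norm (x n i - x n j) \<le> p \<and> norm (v n i - v n j) \<le> q"
    using Suc unfolding p_def q_def .
  have lp: "l * p < 1/4" using inv(2) l by (simp add: field_simps)
  have xs: "\<And>i. i < N \<Longrightarrow> x (Suc n) i = x n i + h *\<^sub>R v n i" using sol unfolding MT_solution_def by blast
  have vs: "\<And>i. i < N \<Longrightarrow> v (Suc n) i = v n i + (h * \<kappa>) *\<^sub>R (\<Sum>j<N. mt_phi N a (x n) i j *\<^sub>R (v n j - v n i))"
    using sol unfolding MT_solution_def by blast
  define w where "w = (\<lambda>i j. (if j = i then 1 - h*\<kappa> else 0) + (h*\<kappa>) * mt_phi N a (x n) i j)"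
  define \<mu> where "\<mu> = h*\<kappa>*((1 - l*p) / real N)"
  have Np: "0 < real N" using N by simp
  have hk: "0 < h*\<kappa>" using h k by simp
  have vrep: "\<And>i. i < N \<Longrightarrow> v (Suc n) i = (\<Sum>j<N. w i j *\<^sub>R v n j)"
    unfolding w_def vs by (rule step_repr) (use phi_sum(1)[where a=a and x="x n", OF N c1 a_bounds] in auto)
  have wsum: "\<And>i. i < N \<Longrightarrow> (\<Sum>j<N. w i j) = 1"
  proof -
    fix i assume i: "i < N"
    have "(\<Sum>j<N. w i j) = (\<Sum>j<N. (if j = i then 1 - h*\<kappa> else 0)) + h*\<kappa> * (\<Sum>j<N. mt_phi N a (x n) i j)"
      unfolding w_def by (simp add: sum.distrib sum_distrib_left)
    also have "\<dots> = 1" using i phi_sum(1)[where a=a and x="x n", OF N c1 a_bounds i] by simp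
    finally show "(\<Sum>j<N. w i j) = 1" .
  qed
  have wlow: "\<And>i j. i < N \<Longrightarrow> j < N \<Longrightarrow> \<mu> \<le> w i j"
  proof -
    fix i j assume i: "i < N" and j: "j < N"
    have xb: "\<forall>j<N. \<forall>k<N. norm (x n j - x n k) \<le> p" using IH by blast
    have "(1 - l * p) / real N \<le> mt_phi N a (x n) i j"
      using phi_lower[OF N c1 c12 a_bounds La a_lip inv(1) xb i j] ldef by simp
    hence "\<mu> \<le> h*\<kappa> * mt_phi N a (x n) i j" unfolding \<mu>_def using hk by (metis less_eq_real_def mult_left_mono times_divide_eq_right)
    moreover have "0 \<le> (if j = i then 1 - h*\<kappa> else 0)" using h by simp
    ultimately show "\<mu> \<le> w i j" unfolding w_def by linarith
  qed
  have Nmu: "real N * \<mu> = h*\<kappa>*(1 - l*p)" unfolding \<mu>_def using Np by simp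
  have e1: "fst (PQ l h \<kappa> P0 Q0 (Suc n)) = p + h*q" "snd (PQ l h \<kappa> P0 Q0 (Suc n)) = (1 - h*\<kappa>*(1-l*p))*q"
    unfolding p_def q_def PQ_Suc by auto
  show ?case unfolding e1
  proof (intro allI impI conjI)
    fix i j assume i: "i < N" and j: "j < N"
    have "norm (x (Suc n) i - x (Suc n) j) = norm ((x n i - x n j) + h *\<^sub>R (v n i - v n j))"
      using xs[OF i] xs[OF j] by (simp add: algebra_simps)
    also have "\<dots> \<le> norm (x n i - x n j) + norm (h *\<^sub>R (v n i - v n j))" by (rule norm_triangle_ineq)
    also have "\<dots> \<le> p + h * q" using IH i j h by (simp add: mult_left_mono add_mono)
    finally show "norm (x (Suc n) i - x (Suc n) j) \<le> p + h * q" .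
    have vb: "\<forall>j<N. \<forall>l<N. norm (v n j - v n l) \<le> q" using IH by blast
    have "norm (v (Suc n) i - v (Suc n) j) \<le> (1 - real N * \<mu>) * q"
      unfolding vrep[OF i] vrep[OF j]
      by (rule contract) (use wlow wsum i j vb in auto)
    thus "norm (v (Suc n) i - v (Suc n) j) \<le> (1 - h*\<kappa>*(1-l*p))*q" using Nmu by simp
  qed
qed



lemma frob_ge:
  fixes y :: "nat \<Rightarrow> real^'d"
  assumes "i < N" "j < N"
  shows "norm (y i - y j) \<le> frobD N y"
proof -
  have "(norm (y i - y j))\<^sup>2 \<le> (\<Sum>j'<N. (norm (y i - y j'))\<^sup>2)"
    by (rule member_le_sum) (use assms in auto)
  also have "\<dots> \<le> (\<Sum>i'<N. \<Sum>j'<N. (norm (y i' - y j'))\<^sup>2)"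
    by (rule member_le_sum[where f="\<lambda>i'. \<Sum>j'<N. (norm (y i' - y j'))\<^sup>2"]) (use assms in \<open>auto intro: sum_nonneg\<close>)
  finally have "sqrt ((norm (y i - y j))\<^sup>2) \<le> sqrt (\<Sum>i'<N. \<Sum>j'<N. (norm (y i' - y j'))\<^sup>2)"
    by (rule real_sqrt_le_mono)
  thus ?thesis unfolding frobD_def by simp
qed

lemma frobD_nonneg: "0 \<le> frobD N y"
  unfolding frobD_def by (auto intro!: sum_nonneg)

lemma frobDD_le:
  fixes y z :: "nat \<Rightarrow> real^'d"
  assumes "\<forall>i<N. \<forall>j<N. norm ((y i - y j) - (z i - z j)) \<le> B" "0 \<le> B"
  shows "frobDD N y z \<le> real N * B"
proof -
  have "(\<Sum>i<N. \<Sum>j<N. (norm ((y i - y j) - (z i - z j)))\<^sup>2) \<le> (\<Sum>i<N. \<Sum>j<N. B\<^sup>2)"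
    by (intro sum_mono power_mono) (use assms in auto)
  also have "\<dots> = (real N * B)\<^sup>2" by (simp add: power2_eq_square)
  finally have "frobDD N y z \<le> sqrt ((real N * B)\<^sup>2)" unfolding frobDD_def by (rule real_sqrt_le_mono)
  thus ?thesis using assms(2) by simp
qed

theorem corollary4p7:
  fixes N :: nat and \<kappa> c1 c2 La C :: real and a :: "real \<Rightarrow> real"
    and V0 Vb0 :: "nat \<Rightarrow> real^'d"
  assumes N: "N \<ge> 1" and kappa: "\<kappa> > 0"
    and c1: "0 < c1" and c12: "c1 \<le> c2"
    and a_bounds: "\<And>r. r \<ge> 0 \<Longrightarrow> c1 \<le> a r \<and> a r \<le> c2"
    and La: "La > 0"
    and a_lip: "\<And>r1 r2. r1 \<ge> 0 \<Longrightarrow> r2 \<ge> 0 \<Longrightarrow> \<bar>a r1 - a r2\<bar> \<le> La * \<bar>r1 - r2\<bar>"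
    and C: "0 < C" "C < 1"
  shows "\<exists>cb0 cb1 cb2 :: real. cb0 \<ge> 0 \<and> cb1 \<ge> 0 \<and> cb2 \<ge> 0 \<and>
    (\<forall>X0 Xb0 :: nat \<Rightarrow> real^'d.
      frobD N X0 < M_const N La c1 c2 \<and> frobD N Xb0 < M_const N La c1 c2 \<and>
      frobD N V0 < \<kappa> * integral {frobD N X0..M_const N La c1 c2} (psi N La c1 c2) \<and>
      frobD N Vb0 < \<kappa> * integral {frobD N Xb0..M_const N La c1 c2} (psi N La c1 c2) \<longrightarrow>
      (\<forall>\<epsilon>::real. 0 < \<epsilon> \<and> \<epsilon> < 1 \<longrightarrow>
        (\<exists>h0>0. \<forall>h x v xb vb.
          0 < h \<and> h < h0 \<and> h < min 1 (1 / \<kappa>) \<and>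
          MT_solution N \<kappa> a h x v \<and> MT_solution N \<kappa> a h xb vb \<and>
          (\<forall>i<N. x 0 i = X0 i \<and> v 0 i = V0 i \<and> xb 0 i = Xb0 i \<and> vb 0 i = Vb0 i) \<longrightarrow>
          (let b1 = sqrt (cb0 * \<epsilon> + cb1 * h + cb2 * h\<^sup>2);
               b2 = C * \<kappa> * psi N La c1 c2 (M_const N La c1 c2) * h
           in \<forall>n. frobDD N (v n) (vb n)
                 \<le> (1 - \<epsilon>) ^ n * frobDD N (v 0) (vb 0)
                   + b1 * exp b2 / (1 - (1 - \<epsilon>) * exp b2) * exp (- b2 * real n)))))"
proof -
  define l where "l = lip_phi N La c1 c2 * real N"
  have Np: "0 < real N" using N by simp
  have lipp: "0 < lip_phi N La c1 c2" unfolding lip_phi_def using La Np c1 c12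
    by (intro mult_pos_pos divide_pos_pos) (auto simp: add_pos_pos)
  have l: "l > 0" unfolding l_def using lipp Np by simp
  have Mc: "M_const N La c1 c2 = 1 / (4*l)" unfolding M_const_def l_def by (simp add: algebra_simps)
  have psie: "psi N La c1 c2 = (\<lambda>s. 1 - l * s)" unfolding psi_def l_def by (simp add: algebra_simps)
  have psiM: "psi N La c1 c2 (M_const N La c1 c2) = 3/4" unfolding psie Mc using l by simp
  define K where "K = real N * (frobD N V0 + frobD N Vb0)"
  have K0: "0 \<le> K" unfolding K_def using frobD_nonneg[of N V0] frobD_nonneg[of N Vb0] by simp
  show ?thesis
  proof (rule exI[of _ "K^2"], rule exI[of _ 0], rule exI[of _ 0], intro conjI allI impI)
    show "0 \<le> K^2" "0 \<le> (0::real)" "0 \<le> (0::real)" by simp_all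
    fix X0 Xb0 :: "nat \<Rightarrow> real^'d" and \<epsilon> :: real
    assume H: "frobD N X0 < M_const N La c1 c2 \<and> frobD N Xb0 < M_const N La c1 c2 \<and>
      frobD N V0 < \<kappa> * integral {frobD N X0..M_const N La c1 c2} (psi N La c1 c2) \<and>
      frobD N Vb0 < \<kappa> * integral {frobD N Xb0..M_const N La c1 c2} (psi N La c1 c2)"
    assume E: "0 < \<epsilon> \<and> \<epsilon> < 1"
    show "\<exists>h0>0. \<forall>h x v xb vb.
          0 < h \<and> h < h0 \<and> h < min 1 (1 / \<kappa>) \<and>
          MT_solution N \<kappa> a h x v \<and> MT_solution N \<kappa> a h xb vb \<and>
          (\<forall>i<N. x 0 i = X0 i \<and> v 0 i = V0 i \<and> xb 0 i = Xb0 i \<and> vb 0 i = Vb0 i) \<longrightarrow>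
          (let b1 = sqrt (K^2 * \<epsilon> + 0 * h + 0 * h\<^sup>2);
               b2 = C * \<kappa> * psi N La c1 c2 (M_const N La c1 c2) * h
           in \<forall>n. frobDD N (v n) (vb n)
                 \<le> (1 - \<epsilon>) ^ n * frobDD N (v 0) (vb 0)
                   + b1 * exp b2 / (1 - (1 - \<epsilon>) * exp b2) * exp (- b2 * real n))"
    proof (intro exI[of _ "\<epsilon> / \<kappa>"] conjI allI impI)
      show "0 < \<epsilon> / \<kappa>" using E kappa by simp
      fix h x v xb vb
      assume A: "0 < h \<and> h < \<epsilon> / \<kappa> \<and> h < min 1 (1 / \<kappa>) \<and>
          MT_solution N \<kappa> a h x v \<and> MT_solution N \<kappa> a h xb vb \<and>
          (\<forall>i<N. x 0 i = X0 i \<and> v 0 i = V0 i \<and> xb 0 i = Xb0 i \<and> vb 0 i = Vb0 i)"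
      have h: "0 < h" "h < 1" "h * \<kappa> < 1" using A kappa by (auto simp: field_simps)
      have hke: "h * \<kappa> < \<epsilon>" using A kappa by (auto simp: field_simps)
      define Psi where "Psi = (\<lambda>s::real. s - l * s^2/2)"
      have intg: "\<And>P0. P0 \<le> M_const N La c1 c2 \<Longrightarrow>
          integral {P0..M_const N La c1 c2} (psi N La c1 c2) = Psi (1/(4*l)) - Psi P0"
        unfolding psie Psi_def Mc by (rule integral_psi)
      define b2 where "b2 = C * \<kappa> * (3/4) * h"
      define \<beta> where "\<beta> = 1 - h*\<kappa>*(3/4)"
      have decay: "\<And>(X::nat \<Rightarrow> real^'d) (V::nat \<Rightarrow> real^'d) xx vv n i j. MT_solution N \<kappa> a h xx vv \<Longrightarrow>
          frobD N X < M_const N La c1 c2 \<Longrightarrow>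
          frobD N V < \<kappa> * integral {frobD N X..M_const N La c1 c2} (psi N La c1 c2) \<Longrightarrow>
          (\<forall>i<N. xx 0 i = X i \<and> vv 0 i = V i) \<Longrightarrow> i < N \<Longrightarrow> j < N \<Longrightarrow>
          norm (vv n i - vv n j) \<le> \<beta>^n * frobD N V"
      proof -
        fix X V :: "nat \<Rightarrow> real^'d" and xx vv n i j
        assume sol: "MT_solution N \<kappa> a h xx vv" and hX: "frobD N X < M_const N La c1 c2"
          and hV: "frobD N V < \<kappa> * integral {frobD N X..M_const N La c1 c2} (psi N La c1 c2)"
          and init: "\<forall>i<N. xx 0 i = X i \<and> vv 0 i = V i" and i: "i < N" and j: "j < N"
        have P0: "0 \<le> frobD N X" "frobD N X < 1/(4*l)" using hX Mc frobD_nonneg by auto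
        have Q0: "0 \<le> frobD N V" "frobD N V + \<kappa> * Psi (frobD N X) < \<kappa> * Psi (1/(4*l))"
          using frobD_nonneg hV intg[of "frobD N X"] hX by (auto simp: algebra_simps)
        have x0: "\<forall>i<N. \<forall>j<N. norm (xx 0 i - xx 0 j) \<le> frobD N X" using init frob_ge by auto
        have v0: "\<forall>i<N. \<forall>j<N. norm (vv 0 i - vv 0 j) \<le> frobD N V" using init frob_ge by auto
        have ag: "norm (vv n i - vv n j) \<le> snd (PQ l h \<kappa> (frobD N X) (frobD N V) n)"
          using agents[OF N c1 c12 a_bounds La a_lip kappa h l_def l sol P0 Q0[unfolded Psi_def] x0 v0] i j
          by blast
        also have "\<dots> \<le> \<beta>^n * frobD N V"
          using PQ_inv[OF l h kappa P0 Q0[unfolded Psi_def], of n] unfolding \<beta>_def by simp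
        finally show "norm (vv n i - vv n j) \<le> \<beta>^n * frobD N V" .
      qed
      have b0: "0 \<le> \<beta>" unfolding \<beta>_def using h kappa by simp
      have bexp: "\<beta> \<le> exp (- b2)"
      proof -
        have "\<beta> \<le> exp (- (h*\<kappa>*(3/4)))" unfolding \<beta>_def using exp_ge_add_one_self[of "- (h*\<kappa>*(3/4))"] by simp
        also have "\<dots> \<le> exp (- b2)" unfolding b2_def using C h kappa
          by (simp add: mult_right_le_one_le mult_le_cancel_right1)
        finally show ?thesis .
      qed
      have b2p: "0 \<le> b2" unfolding b2_def using C h kappa by simp
      have b2e: "b2 < \<epsilon>"
      proof -
        have "b2 \<le> \<kappa> * h" unfolding b2_def using C h kappa
          by (simp add: mult_right_le_one_le mult_le_cancel_right1)
        thus ?thesis using hke by (simp add: mult.commute)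
      qed
      define D where "D = 1 - (1 - \<epsilon>) * exp b2"
      have "(1 - \<epsilon>) * 1 \<le> (1 - \<epsilon>) * exp b2" using E b2p by (intro mult_left_mono) auto
      hence Dle: "D \<le> \<epsilon>" unfolding D_def by simp
      have Dpos: "0 < D"
      proof -
        have "(1 - \<epsilon>) * exp b2 < (1 - \<epsilon>) * exp \<epsilon>" using E b2e by simp
        also have "\<dots> \<le> exp (- \<epsilon>) * exp \<epsilon>" using E exp_ge_add_one_self[of "- \<epsilon>"] by (intro mult_right_mono) auto
        also have "\<dots> = 1" by (simp add: exp_minus)
        finally show ?thesis unfolding D_def by simp
      qed
      have coef: "K \<le> sqrt (K^2 * \<epsilon> + 0 * h + 0 * h\<^sup>2) * exp b2 / D"
      proof -
        have s: "sqrt (K^2 * \<epsilon> + 0 * h + 0 * h\<^sup>2) = K * sqrt \<epsilon>" using K0 by (simp add: real_sqrt_mult)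
        have "\<epsilon> * \<epsilon> \<le> 1 * \<epsilon>" using E by (intro mult_right_mono) auto
        hence "sqrt (\<epsilon>^2) \<le> sqrt \<epsilon>" by (intro real_sqrt_le_mono) (simp add: power2_eq_square)
        hence se: "\<epsilon> \<le> sqrt \<epsilon>" using E by simp
        have "K * D \<le> K * \<epsilon>" using Dle K0 by (simp add: mult_left_mono)
        also have "\<dots> \<le> K * sqrt \<epsilon>" using se K0 by (simp add: mult_left_mono)
        also have "\<dots> \<le> K * sqrt \<epsilon> * exp b2"
        proof -
          have "K * sqrt \<epsilon> * 1 \<le> K * sqrt \<epsilon> * exp b2" using K0 b2p E by (intro mult_left_mono) auto
          thus ?thesis by simp
        qed
        finally show ?thesis unfolding s using Dpos by (simp add: field_simps)
      qed
      show "let b1 = sqrt (K^2 * \<epsilon> + 0 * h + 0 * h\<^sup>2);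
               b2 = C * \<kappa> * psi N La c1 c2 (M_const N La c1 c2) * h
           in \<forall>n. frobDD N (v n) (vb n)
                 \<le> (1 - \<epsilon>) ^ n * frobDD N (v 0) (vb 0)
                   + b1 * exp b2 / (1 - (1 - \<epsilon>) * exp b2) * exp (- b2 * real n)"
        unfolding Let_def psiM b2_def[symmetric] D_def[symmetric]
      proof
        fix n
        have pw: "\<forall>i<N. \<forall>j<N. norm ((v n i - v n j) - (vb n i - vb n j)) \<le> \<beta>^n * (frobD N V0 + frobD N Vb0)"
        proof (intro allI impI)
          fix i j assume i: "i < N" and j: "j < N"
          have "norm ((v n i - v n j) - (vb n i - vb n j)) \<le> norm (v n i - v n j) + norm (vb n i - vb n j)"
            by (rule norm_triangle_ineq4)
          also have "\<dots> \<le> \<beta>^n * frobD N V0 + \<beta>^n * frobD N Vb0"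
            using decay[where xx=x and vv=v and X=X0 and V=V0 and n=n and i=i and j=j] decay[where xx=xb and vv=vb and X=Xb0 and V=Vb0 and n=n and i=i and j=j] A H i j by auto
          finally show "norm ((v n i - v n j) - (vb n i - vb n j)) \<le> \<beta>^n * (frobD N V0 + frobD N Vb0)"
            by (simp add: distrib_left)
        qed
        have "frobDD N (v n) (vb n) \<le> real N * (\<beta>^n * (frobD N V0 + frobD N Vb0))"
          by (rule frobDD_le[OF pw]) (use b0 frobD_nonneg[of N V0] frobD_nonneg[of N Vb0] in simp)
        also have "\<dots> = \<beta>^n * K" unfolding K_def by simp
        also have "\<dots> \<le> exp (- b2 * real n) * K"
        proof -
          have "\<beta>^n \<le> (exp (- b2))^n" using b0 bexp by (intro power_mono) auto
          also have "\<dots> = exp (- b2 * real n)" by (simp add: exp_of_nat_mult[symmetric] mult.commute)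
          finally show ?thesis using K0 by (simp add: mult_right_mono)
        qed
        also have "\<dots> \<le> sqrt (K^2 * \<epsilon> + 0 * h + 0 * h\<^sup>2) * exp b2 / D * exp (- b2 * real n)"
          using mult_right_mono[OF coef, of "exp (- b2 * real n)"] by (simp add: mult.commute)
        also have "\<dots> \<le> (1 - \<epsilon>) ^ n * frobDD N (v 0) (vb 0)
              + sqrt (K^2 * \<epsilon> + 0 * h + 0 * h\<^sup>2) * exp b2 / D * exp (- b2 * real n)"
        proof -
          have "0 \<le> frobDD N (v 0) (vb 0)" unfolding frobDD_def by (auto intro!: sum_nonneg)
          moreover have "0 \<le> (1 - \<epsilon>) ^ n" using E by simp
          ultimately show ?thesis by simp
        qed
        finally show "frobDD N (v n) (vb n) \<le> (1 - \<epsilon>) ^ n * frobDD N (v 0) (vb 0)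
              + sqrt (K^2 * \<epsilon> + 0 * h + 0 * h\<^sup>2) * exp b2 / D * exp (- b2 * real n)" .
      qed
    qed
  qed
qed


end
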